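(* Let $\mathcal{X},\mathcal{Y}$ be finite sets, $P_X$ a probability distribution on $\mathcal{X}$, $d:\mathcal{X}\times\mathcal{Y}\to[0,\infty)$, $Q_Y$ a probability distribution on $\mathcal{Y}$, and $w\in(0,1]$. For $x\in\mathcal{X}$ define $$W^w_{Y|X=x}(y)=w^{-1}\,Q_Y(y)\,\Pr_U\big[p_{c,x,y,U}\le w\big],\qquad y\in\mathcal{Y},$$ where $U$ is uniform on $[0,1]$. Then for every $x$, $W^w_{Y|X=x}$ is a probability distribution on $\mathcal{Y}$, and $$\tilde D(w,Q_Y)=\mathbb{E}_{P_X\times W^w_{Y|X}}[d(X,Y)].$$
   Context: $p_{c,x,y,u}=Q_Y\{y': d(x,y')<d(x,y)\}+u\cdot Q_Y\{y': d(x,y')=d(x,y)\}$. $\tilde D(w,Q_Y)=w^{-1}\,\mathbb{E}[d(X,Y)\mathbf{1}\{p_{c,X,Y,U}\le w\}]$ with $X\sim P_X$, $Y\sim Q_Y$, $U$ uniform on $[0,1]$ independent. $P_X\times W_{Y|X}$ denotes the joint law with $X\sim P_X$ and $Y$ given $X=x$ distributed as $W_{Y|X=x}$. *)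

theory Defs
  imports "HOL-Probability.Probability"
begin

definition unif01 :: "real measure" where
  "unif01 = uniform_measure lborel {0..1}"

definition pc :: "'y pmf \<Rightarrow> ('x \<Rightarrow> 'y \<Rightarrow> real) \<Rightarrow> 'x \<Rightarrow> 'y \<Rightarrow> real \<Rightarrow> real" where
  "pc Q d x y u = measure_pmf.prob Q {y'. d x y' < d x y}
                  + u * measure_pmf.prob Q {y'. d x y' = d x y}"

definition Wc :: "real \<Rightarrow> 'y pmf \<Rightarrow> ('x \<Rightarrow> 'y \<Rightarrow> real) \<Rightarrow> 'x \<Rightarrow> 'y \<Rightarrow> real" where
  "Wc w Q d x y = inverse w * pmf Q y * measure unif01 {u\<in>space unif01. pc Q d x y u \<le> w}"

definition Dtilde :: "'x pmf \<Rightarrow> ('x \<Rightarrow> 'y \<Rightarrow> real) \<Rightarrow> real \<Rightarrow> 'y pmf \<Rightarrow> real" where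
  "Dtilde P d w Q = inverse w *
     (\<integral>((x,y),u). d x y * indicator {t. pc Q d x y t \<le> w} u
        \<partial>((measure_pmf P \<Otimes>\<^sub>M measure_pmf Q) \<Otimes>\<^sub>M unif01))"

end

theory Submission
  imports Defs
begin

lemma space_unif01[simp]: "space unif01 = UNIV"
  by (simp add: unif01_def)
lemma sets_unif01[simp]: "sets unif01 = sets borel"
  by (simp add: unif01_def)

lemma sets_PQ:
  fixes P :: "'x::finite pmf" and Q :: "'y::finite pmf"
  shows "sets (measure_pmf P \<Otimes>\<^sub>M measure_pmf Q) = sets (count_space UNIV)"
proof -
  have "sets (measure_pmf P \<Otimes>\<^sub>M measure_pmf Q) = sets (count_space (UNIV::'x set) \<Otimes>\<^sub>M count_space (UNIV::'y set))"
    by (rule sets_pair_measure_cong) (simp_all only: sets_measure_pmf_count_space)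
  also have "count_space (UNIV::'x set) \<Otimes>\<^sub>M count_space (UNIV::'y set) = count_space (UNIV \<times> UNIV)"
    by (rule pair_measure_countable) (simp_all add: countable_finite)
  finally show ?thesis by simp
qed

lemma meas_PQ:
  fixes P :: "'x::finite pmf" and Q :: "'y::finite pmf" and g :: "'x \<times> 'y \<Rightarrow> real"
  shows "g \<in> borel_measurable (measure_pmf P \<Otimes>\<^sub>M measure_pmf Q)"
  by (simp add: measurable_cong_sets[OF sets_PQ refl])

lemma meas_fun:
  fixes P :: "'x::finite pmf" and Q :: "'y::finite pmf" and F :: "'x \<Rightarrow> 'y \<Rightarrow> real \<Rightarrow> real"
  assumes "\<And>x y. F x y \<in> borel_measurable borel"
  shows "(\<lambda>((x,y),u). F x y u) \<in> borel_measurable ((measure_pmf P \<Otimes>\<^sub>M measure_pmf Q) \<Otimes>\<^sub>M unif01)"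
proof -
  have A: "(\<lambda>z. F (fst i) (snd i) (snd z)) \<in> borel_measurable ((measure_pmf P \<Otimes>\<^sub>M measure_pmf Q) \<Otimes>\<^sub>M unif01)"
    for i :: "'x \<times> 'y"
  proof -
    have "F (fst i) (snd i) \<in> borel_measurable unif01"
      by (subst measurable_cong_sets[OF sets_unif01 refl]) (rule assms)
    then show ?thesis by (rule measurable_compose[OF measurable_snd])
  qed
  have I: "(\<lambda>z. z) \<in> measurable (measure_pmf P \<Otimes>\<^sub>M measure_pmf Q) (count_space UNIV)"
    by (simp add: measurable_cong_sets[OF sets_PQ refl])
  have B: "fst \<in> measurable ((measure_pmf P \<Otimes>\<^sub>M measure_pmf Q) \<Otimes>\<^sub>M unif01) (count_space UNIV)"
    using measurable_compose[OF measurable_fst I, of unif01] by simp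
  have "(\<lambda>z. F (fst (fst z)) (snd (fst z)) (snd z)) \<in> borel_measurable ((measure_pmf P \<Otimes>\<^sub>M measure_pmf Q) \<Otimes>\<^sub>M unif01)"
    using measurable_compose_countable[where f="\<lambda>i z. F (fst i) (snd i) (snd z)", OF A B] by simp
  then show ?thesis by (simp add: case_prod_beta')
qed
lemma prob_unif01: "prob_space unif01"
  unfolding unif01_def by (rule prob_space_uniform_measure) auto

lemma meas_unif01:
  assumes "b > 0"
  shows "measure unif01 {u. a + u * b \<le> (w::real)} = max 0 (min 1 ((w - a) / b))"
proof -
  have e: "{u. a + u * b \<le> w} = {..(w-a)/b}" using assms by (auto simp: field_simps)
  have "measure unif01 {u. a + u * b \<le> w} = measure lborel ({0..1} \<inter> {..(w-a)/b}) / measure lborel {0..1::real}"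
    unfolding unif01_def e by (subst measure_uniform_measure) auto
  also have "\<dots> = measure lborel ({0..1} \<inter> {..(w-a)/b})" by simp
  also have "\<dots> = max 0 (min 1 ((w - a) / b))"
  proof (cases "(w-a)/b < 0")
    case True then have "{0..1} \<inter> {..(w-a)/b} = {}" by auto
    then show ?thesis using True by simp
  next
    case False then have "{0..1} \<inter> {..(w-a)/b} = {0..min 1 ((w-a)/b)}" by auto
    then show ?thesis using False by simp
  qed
  finally show ?thesis .
qed

lemma clamp_eq:
  fixes a b w :: real assumes "b > 0"
  shows "b * max 0 (min 1 ((w - a) / b)) = min w (a + b) - min w a"
proof -
  consider "w \<le> a" | "a < w" "w < a + b" | "a + b \<le> w" by linarith
  then show ?thesis
  proof cases
    case 1 then have "(w-a)/b \<le> 0" using assms by (simp add: divide_nonpos_pos)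
    then show ?thesis using 1 assms by simp
  next
    case 2 then have "(w-a)/b \<le> 1" "(w-a)/b \<ge> 0" using assms by (simp_all add: field_simps)
    then show ?thesis using 2 assms by simp
  next
    case 3 then have "(w-a)/b \<ge> 1" using assms by (simp add: field_simps)
    then show ?thesis using 3 assms by simp
  qed
qed

lemma tele:
  fixes Q :: "'y pmf" and g :: "'y \<Rightarrow> real" and V :: "real set"
  assumes finV: "finite V" and gV: "\<And>y. g y \<in> V" and w0: "w \<ge> 0"
  shows "(\<Sum>s\<in>{s\<in>V. s \<le> c}. min w (measure_pmf.prob Q {y. g y \<le> s}) - min w (measure_pmf.prob Q {y. g y < s}))
         = min w (measure_pmf.prob Q {y. g y \<le> c})"
proof (induction "card {s\<in>V. s \<le> c}" arbitrary: c rule: less_induct)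
  case less
  let ?S = "{s\<in>V. s \<le> c}"
  let ?h = "\<lambda>s. min w (measure_pmf.prob Q {y. g y \<le> s}) - min w (measure_pmf.prob Q {y. g y < s})"
  have fin: "finite ?S" using finV by simp
  show ?case
  proof (cases "?S = {}")
    case True
    then have "{y. g y \<le> c} = {}" using gV by auto
    then show ?thesis unfolding True using w0 by simp
  next
    case False
    define m where "m = Max ?S"
    have mS: "m \<in> ?S" using Max_in[OF fin False] m_def by simp
    have mmax: "\<And>s. s \<in> ?S \<Longrightarrow> s \<le> m" using Max_ge[OF fin] m_def by simp
    have Gc: "{y. g y \<le> c} = {y. g y \<le> m}" using gV mS mmax by force
    have spl: "?S = insert m {s\<in>V. s < m}" using mS mmax by force
    have "sum ?h ?S = ?h m + sum ?h {s\<in>V. s < m}"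
      unfolding spl using finV by (subst sum.insert) auto
    also have "sum ?h {s\<in>V. s < m} = min w (measure_pmf.prob Q {y. g y < m})"
    proof (cases "{s\<in>V. s < m} = {}")
      case True
      then have "{y. g y < m} = {}" using gV by auto
      then show ?thesis unfolding True using w0 by simp
    next
      case F2: False
      define m' where "m' = Max {s\<in>V. s < m}"
      have fin2: "finite {s\<in>V. s < m}" using finV by simp
      have m'S: "m' \<in> {s\<in>V. s < m}" using Max_in[OF fin2 F2] m'_def by simp
      have m'max: "\<And>s. s \<in> {s\<in>V. s < m} \<Longrightarrow> s \<le> m'" using Max_ge[OF fin2] m'_def by simp
      have eq: "{s\<in>V. s < m} = {s\<in>V. s \<le> m'}" using m'S m'max by force
      have "card {s\<in>V. s \<le> m'} < card ?S"
        unfolding eq[symmetric] spl using fin2 by simp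
      then have IH: "sum ?h {s\<in>V. s \<le> m'} = min w (measure_pmf.prob Q {y. g y \<le> m'})"
        using less by blast
      have "{y. g y \<le> m'} = {y. g y < m}" using gV m'S m'max by force
      then show ?thesis using IH eq by simp
    qed
    finally show ?thesis using Gc by simp
  qed
qed


lemma Wc_sum:
  fixes Q :: "'y::finite pmf" and d :: "'x \<Rightarrow> 'y \<Rightarrow> real"
  assumes w0: "0 < w" and w1: "w \<le> 1"
  shows "(\<Sum>y\<in>UNIV. Wc w Q d x y) = 1"
proof -
  define G where "G s = measure_pmf.prob Q {y. d x y \<le> s}" for s
  define G' where "G' s = measure_pmf.prob Q {y. d x y < s}" for s
  define B where "B s = measure_pmf.prob Q {y. d x y = s}" for s
  define h where "h s = min w (G s) - min w (G' s)" for s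
  define M where "M y = measure unif01 {u\<in>space unif01. pc Q d x y u \<le> w}" for y
  have GB: "G s = G' s + B s" for s
  proof -
    have "{y. d x y \<le> s} = {y. d x y < s} \<union> {y. d x y = s}" by auto
    then show ?thesis unfolding G_def G'_def B_def
      by (simp only:) (rule measure_pmf.finite_measure_Union, auto)
  qed
  have pw: "pmf Q y * M y = pmf Q y / B (d x y) * h (d x y)" for y
  proof (cases "pmf Q y = 0")
    case True then show ?thesis by simp
  next
    case False
    have "pmf Q y \<le> B (d x y)" unfolding B_def measure_pmf_single[symmetric]
      by (rule measure_pmf.finite_measure_mono) auto
    then have bpos: "B (d x y) > 0" using False pmf_nonneg[of Q y] by linarith
    have "M y = measure unif01 {u. G' (d x y) + u * B (d x y) \<le> w}"
      unfolding M_def pc_def G'_def B_def by simp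
    also have "\<dots> = max 0 (min 1 ((w - G' (d x y)) / B (d x y)))"
      by (rule meas_unif01[OF bpos])
    finally have "B (d x y) * M y = h (d x y)"
      using clamp_eq[OF bpos, of w "G' (d x y)"] unfolding h_def GB by simp
    then show ?thesis using bpos by (simp add: field_simps)
  qed
  have "(\<Sum>y\<in>UNIV. Wc w Q d x y) = inverse w * (\<Sum>y\<in>UNIV. pmf Q y * M y)"
    unfolding Wc_def M_def by (simp add: sum_distrib_left mult.assoc)
  also have "(\<Sum>y\<in>UNIV. pmf Q y * M y) = (\<Sum>y\<in>UNIV. pmf Q y / B (d x y) * h (d x y))"
    using pw by simp
  also have "\<dots> = (\<Sum>s\<in>range (d x). \<Sum>y\<in>{y. d x y = s}. pmf Q y / B (d x y) * h (d x y))"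
    using sum.image_gen[of UNIV "\<lambda>y. pmf Q y / B (d x y) * h (d x y)" "d x"] by simp
  also have "\<dots> = (\<Sum>s\<in>range (d x). h s)"
  proof (rule sum.cong[OF refl])
    fix s
    have "(\<Sum>y\<in>{y. d x y = s}. pmf Q y / B (d x y) * h (d x y)) = (\<Sum>y\<in>{y. d x y = s}. pmf Q y) * (h s / B s)"
      by (simp add: sum_distrib_right sum_divide_distrib)
    also have "(\<Sum>y\<in>{y. d x y = s}. pmf Q y) = B s"
      unfolding B_def by (simp add: measure_measure_pmf_finite)
    also have "B s * (h s / B s) = h s"
    proof (cases "B s = 0")
      case True then have "h s = 0" using GB[of s] unfolding h_def by simp
      then show ?thesis by simp
    next
      case False then show ?thesis by simp
    qed
    finally show "(\<Sum>y\<in>{y. d x y = s}. pmf Q y / B (d x y) * h (d x y)) = h s" .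
  qed
  also have "\<dots> = w"
  proof -
    let ?V = "range (d x)"
    have finV: "finite ?V" by simp
    have "(\<Sum>s\<in>{s\<in>?V. s \<le> Max ?V}. h s) = min w (G (Max ?V))"
      unfolding h_def G_def G'_def by (rule tele) (use w0 in auto)
    moreover have "{s\<in>?V. s \<le> Max ?V} = ?V" using finV by auto
    moreover have "{y. d x y \<le> Max ?V} = UNIV" using finV by auto
    ultimately have "(\<Sum>s\<in>?V. h s) = min w (measure_pmf.prob Q UNIV)" unfolding G_def by simp
    then show ?thesis using w1 by simp
  qed
  finally show ?thesis using w0 by simp
qed


lemma Dtilde_eq:
  fixes P :: "'x::finite pmf" and Q :: "'y::finite pmf" and d :: "'x \<Rightarrow> 'y \<Rightarrow> real"
  shows "Dtilde P d w Q = (\<Sum>x\<in>UNIV. \<Sum>y\<in>UNIV. pmf P x * Wc w Q d x y * d x y)"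
proof -
  let ?PQ = "measure_pmf P \<Otimes>\<^sub>M measure_pmf Q"
  define f where "f = (\<lambda>((x,y),u). d x y * indicator {t. pc Q d x y t \<le> w} u)"
  define M where "M x y = measure unif01 {u\<in>space unif01. pc Q d x y u \<le> w}" for x y
  define g where "g = (\<lambda>(x,y). d x y * M x y)"
  define B where "B = Max (range (\<lambda>(x,y). \<bar>d x y\<bar>))"
  have Bge: "\<bar>d x y\<bar> \<le> B" for x y unfolding B_def by (rule Max_ge) auto
  interpret PQ: prob_space ?PQ
    by (intro prob_space_pair measure_pmf.prob_space_axioms)
  interpret U: prob_space unif01 by (rule prob_unif01)
  interpret PQU: pair_sigma_finite ?PQ unif01
    by (intro pair_sigma_finite.intro PQ.sigma_finite_measure_axioms U.sigma_finite_measure_axioms)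
  interpret PQUp: prob_space "?PQ \<Otimes>\<^sub>M unif01"
    by (intro prob_space_pair PQ.prob_space_axioms U.prob_space_axioms)
  interpret PQp: pair_sigma_finite "measure_pmf P" "measure_pmf Q"
    by (intro pair_sigma_finite.intro measure_pmf.sigma_finite_measure_axioms)
  have fm: "f \<in> borel_measurable (?PQ \<Otimes>\<^sub>M unif01)"
  proof -
    have "(\<lambda>u. d x y * indicator {t. pc Q d x y t \<le> w} u) \<in> borel_measurable borel" for x y
    proof -
      have "{t. pc Q d x y t \<le> w} \<in> sets borel" unfolding pc_def
        by (intro borel_closed closed_Collect_le continuous_intros)
      then show ?thesis
        by (intro borel_measurable_times borel_measurable_const borel_measurable_indicator)
    qed
    then show ?thesis unfolding f_def by (rule meas_fun)
  qed
  have fi: "integrable (?PQ \<Otimes>\<^sub>M unif01) f"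
  proof (rule PQUp.integrable_const_bound[where B = B])
    show "AE z in ?PQ \<Otimes>\<^sub>M unif01. norm (f z) \<le> B"
    proof (rule AE_I2)
      fix z :: "('x \<times> 'y) \<times> real"
      obtain x y u where z: "z = ((x,y),u)" by (metis prod.collapse)
      have "norm (f z) \<le> \<bar>d x y\<bar>" unfolding z f_def by (simp add: abs_mult indicator_def)
      then show "norm (f z) \<le> B" using Bge[of x y] by linarith
    qed
  qed (rule fm)
  have gi: "integrable ?PQ g"
  proof (rule PQ.integrable_const_bound[where B = "B"])
    show "AE z in ?PQ. norm (g z) \<le> B"
    proof (rule AE_I2)
      fix z :: "'x \<times> 'y"
      obtain x y where z: "z = (x,y)" by (metis prod.collapse)
      have "M x y \<le> 1" "M x y \<ge> 0" unfolding M_def by (simp_all add: U.prob_le_1)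
      then have "norm (g z) \<le> \<bar>d x y\<bar>" unfolding z g_def by (simp add: abs_mult mult_left_le)
      then show "norm (g z) \<le> B" using Bge[of x y] by linarith
    qed
  qed (rule meas_PQ)
  have "Dtilde P d w Q = inverse w * integral\<^sup>L (?PQ \<Otimes>\<^sub>M unif01) f"
    by (simp only: Dtilde_def f_def)
  also have "integral\<^sup>L (?PQ \<Otimes>\<^sub>M unif01) f = (\<integral>z. (\<integral>u. f (z,u) \<partial>unif01) \<partial>?PQ)"
    by (rule PQU.integral_fst'[symmetric, OF fi])
  also have "\<dots> = (\<integral>z. g z \<partial>?PQ)"
  proof (rule Bochner_Integration.integral_cong[OF refl])
    fix z :: "'x \<times> 'y"
    obtain x y where z: "z = (x,y)" by (metis prod.collapse)
    show "(\<integral>u. f (z,u) \<partial>unif01) = g z"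
      unfolding z f_def g_def M_def by simp
  qed
  also have "\<dots> = (\<integral>x. (\<integral>y. g (x,y) \<partial>measure_pmf Q) \<partial>measure_pmf P)"
    by (rule PQp.integral_fst'[symmetric, OF gi])
  also have "\<dots> = (\<integral>x. (\<Sum>y\<in>UNIV. g (x,y) * pmf Q y) \<partial>measure_pmf P)"
  proof (rule Bochner_Integration.integral_cong[OF refl])
    fix x
    show "(\<integral>y. g (x,y) \<partial>measure_pmf Q) = (\<Sum>y\<in>UNIV. g (x,y) * pmf Q y)"
      by (rule integral_measure_pmf_real) auto
  qed
  also have "\<dots> = (\<Sum>x\<in>UNIV. (\<Sum>y\<in>UNIV. g (x,y) * pmf Q y) * pmf P x)"
    by (rule integral_measure_pmf_real[where f="\<lambda>x. \<Sum>y\<in>UNIV. g (x,y) * pmf Q y" and A=UNIV]) simp_all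
  finally have L: "Dtilde P d w Q = inverse w * (\<Sum>x\<in>UNIV. (\<Sum>y\<in>UNIV. d x y * M x y * pmf Q y) * pmf P x)"
    unfolding g_def by simp
  have "(\<Sum>x\<in>UNIV. \<Sum>y\<in>UNIV. pmf P x * Wc w Q d x y * d x y)
      = (\<Sum>x\<in>UNIV. \<Sum>y\<in>UNIV. inverse w * (d x y * M x y * pmf Q y * pmf P x))"
    by (intro sum.cong refl) (simp add: Wc_def M_def mult.commute mult.left_commute)
  also have "\<dots> = inverse w * (\<Sum>x\<in>UNIV. (\<Sum>y\<in>UNIV. d x y * M x y * pmf Q y) * pmf P x)"
    by (simp add: sum_distrib_left sum_distrib_right)
  finally show ?thesis using L by simp
qed

theorem proposition2:
  fixes P :: "'x::finite pmf" and Q :: "'y::finite pmf"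
    and d :: "'x \<Rightarrow> 'y \<Rightarrow> real" and w :: real
  assumes "\<And>x y. d x y \<ge> 0"
    and "0 < w" and "w \<le> 1"
  shows "(\<forall>x. (\<forall>y. Wc w Q d x y \<ge> 0) \<and> (\<Sum>y\<in>UNIV. Wc w Q d x y) = 1)
       \<and> Dtilde P d w Q = (\<Sum>x\<in>UNIV. \<Sum>y\<in>UNIV. pmf P x * Wc w Q d x y * d x y)"
proof (intro conjI allI)
  fix x y
  show "Wc w Q d x y \<ge> 0" unfolding Wc_def using assms(2) by simp
next
  fix x
  show "(\<Sum>y\<in>UNIV. Wc w Q d x y) = 1" by (rule Wc_sum) (use assms in auto)
next
  show "Dtilde P d w Q = (\<Sum>x\<in>UNIV. \<Sum>y\<in>UNIV. pmf P x * Wc w Q d x y * d x y)"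
    by (rule Dtilde_eq)
qed

end
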